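(* A Banach $f$-algebra $E$ is $mw$-continuous if and only if, for every net $(x_\alpha)$ in $E$, $x_\alpha\downarrow0$ implies $x_\alpha\xrightarrow{mw}0$.
   Context: All vector lattices are real and Archimedean. An $f$-algebra is a vector lattice with an associative multiplication making it an algebra, such that products of positive elements are positive and $x\wedge y=0$ implies $(xz)\wedge y=(zx)\wedge y=0$ for all $z\ge0$. A Banach $f$-algebra is an $f$-algebra which is a Banach lattice with $\|xy\|\le\|x\|\|y\|$. A net $(x_\alpha)$ in $E$ $mw$-converges to $x$ ($x_\alpha\xrightarrow{mw}x$) if $|x_\alpha-x|u\to0$ weakly for every $u\in E_+$. A net $(x_\alpha)$ order converges to $x$ ($x_\alpha\xrightarrow{o}x$) if there is a net $y_\beta\downarrow0$ such that for every $\beta$ there is $\alpha_0$ with $|x_\alpha-x|\le y_\beta$ for all $\alpha\ge\alpha_0$. $E$ is called $mw$-continuous if $x_\alpha\xrightarrow{o}0$ implies $x_\alpha\xrightarrow{mw}0$. *)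

theory Defs
  imports "HOL-Analysis.Analysis"
begin

definition lat_abs :: "'a::{lattice, ab_group_add} \<Rightarrow> 'a" where
  "lat_abs x = sup x (- x)"

text \<open>The ambient type class provides: a real vector space with a
  compatible partial order that is a lattice (a vector lattice), an associative
  bilinear multiplication with submultiplicative norm, and completeness of the norm.
  The predicate adds: Archimedean property, positivity of products of positives,
  the f-algebra condition, and the Banach lattice norm condition.\<close>
definition banach_f_algebra ::
  "'a::{real_normed_algebra, banach, lattice, ordered_real_vector} itself \<Rightarrow> bool" where
  "banach_f_algebra _ \<longleftrightarrow>
     (\<forall>x y::'a. 0 \<le> x \<and> (\<forall>n::nat. of_nat n *\<^sub>R x \<le> y) \<longrightarrow> x = 0) \<and>
     (\<forall>x y::'a. 0 \<le> x \<and> 0 \<le> y \<longrightarrow> 0 \<le> x * y) \<and>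
     (\<forall>x y z::'a. inf x y = 0 \<and> 0 \<le> z \<longrightarrow> inf (x * z) y = 0 \<and> inf (z * x) y = 0) \<and>
     (\<forall>x y::'a. lat_abs x \<le> lat_abs y \<longrightarrow> norm x \<le> norm y)"

text \<open>A net is given by a nonempty index set I with a directed preorder r on I,
  together with a map x from indices to E.\<close>
definition directed_on :: "'i set \<Rightarrow> ('i \<Rightarrow> 'i \<Rightarrow> bool) \<Rightarrow> bool" where
  "directed_on I r \<longleftrightarrow> I \<noteq> {} \<and> (\<forall>a\<in>I. r a a) \<and>
     (\<forall>a\<in>I. \<forall>b\<in>I. \<forall>c\<in>I. r a b \<and> r b c \<longrightarrow> r a c) \<and>
     (\<forall>a\<in>I. \<forall>b\<in>I. \<exists>c\<in>I. r a c \<and> r b c)"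

definition net_eventually :: "'i set \<Rightarrow> ('i \<Rightarrow> 'i \<Rightarrow> bool) \<Rightarrow> ('i \<Rightarrow> bool) \<Rightarrow> bool" where
  "net_eventually I r P \<longleftrightarrow> (\<exists>a0\<in>I. \<forall>a\<in>I. r a0 a \<longrightarrow> P a)"

definition net_decr_to_zero :: "'i set \<Rightarrow> ('i \<Rightarrow> 'i \<Rightarrow> bool) \<Rightarrow> ('i \<Rightarrow> 'a::{lattice, zero}) \<Rightarrow> bool" where
  "net_decr_to_zero I r x \<longleftrightarrow>
     (\<forall>a\<in>I. \<forall>b\<in>I. r a b \<longrightarrow> x b \<le> x a) \<and>
     (\<forall>a\<in>I. 0 \<le> x a) \<and> (\<forall>z. (\<forall>a\<in>I. z \<le> x a) \<longrightarrow> z \<le> 0)"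

definition order_conv :: "'i set \<Rightarrow> ('i \<Rightarrow> 'i \<Rightarrow> bool) \<Rightarrow> ('i \<Rightarrow> 'a::{lattice, ab_group_add}) \<Rightarrow> 'a \<Rightarrow> bool" where
  "order_conv I r x l \<longleftrightarrow>
     (\<exists>(J::'i set) s y. directed_on J s \<and> net_decr_to_zero J s y \<and>
        (\<forall>b\<in>J. net_eventually I r (\<lambda>a. lat_abs (x a - l) \<le> y b)))"

definition weak_conv :: "'i set \<Rightarrow> ('i \<Rightarrow> 'i \<Rightarrow> bool) \<Rightarrow> ('i \<Rightarrow> 'a::real_normed_vector) \<Rightarrow> 'a \<Rightarrow> bool" where
  "weak_conv I r x l \<longleftrightarrow>
     (\<forall>f::'a \<Rightarrow> real. bounded_linear f \<longrightarrow>
        (\<forall>\<epsilon>>0. net_eventually I r (\<lambda>a. \<bar>f (x a) - f l\<bar> < \<epsilon>)))"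

definition mw_conv :: "'i set \<Rightarrow> ('i \<Rightarrow> 'i \<Rightarrow> bool) \<Rightarrow>
    ('i \<Rightarrow> 'a::{real_normed_algebra, lattice, ordered_real_vector}) \<Rightarrow> 'a \<Rightarrow> bool" where
  "mw_conv I r x l \<longleftrightarrow> (\<forall>u::'a. 0 \<le> u \<longrightarrow> weak_conv I r (\<lambda>a. lat_abs (x a - l) * u) 0)"

definition mw_continuous ::
  "'a::{real_normed_algebra, lattice, ordered_real_vector} itself \<Rightarrow> 'i itself \<Rightarrow> bool" where
  "mw_continuous _ _ \<longleftrightarrow>
     (\<forall>(I::'i set) r (x::'i \<Rightarrow> 'a). directed_on I r \<longrightarrow> order_conv I r x 0 \<longrightarrow> mw_conv I r x 0)"

end

theory Submission
  imports Defs
begin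

lemma labs_pos: "0 \<le> (x::'a::{lattice,ordered_ab_group_add}) \<Longrightarrow> lat_abs x = x"
  unfolding lat_abs_def
  by (metis neg_le_0_iff_le order_trans sup.absorb1)

lemma labs_ge: "x \<le> lat_abs (x::'a::{lattice,ordered_ab_group_add})" "- x \<le> lat_abs x"
  unfolding lat_abs_def by auto

lemma labs_nonneg: "0 \<le> lat_abs (x::'a::{lattice,ordered_real_vector})"
proof -
  have "x + - x \<le> lat_abs x + lat_abs x" using labs_ge add_mono by blast
  then have h: "0 \<le> lat_abs x + lat_abs x" by simp
  have "lat_abs x = (1/2::real) *\<^sub>R (lat_abs x + lat_abs x)"
    by (simp add: scaleR_2[symmetric])
  also have "0 \<le> \<dots>" using h by (intro scaleR_nonneg_nonneg) auto
  finally show ?thesis by simp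
qed

lemma x_plus_labs: "0 \<le> x + lat_abs (x::'a::{lattice,ordered_ab_group_add})"
proof -
  have "x + - x \<le> x + lat_abs x" using labs_ge(2) add_left_mono by blast
  then show ?thesis by simp
qed

definition posP :: "('a::{real_normed_algebra, lattice, ordered_real_vector} \<Rightarrow> real) \<Rightarrow> 'a \<Rightarrow> real" where
  "posP f w = Sup (f ` {v. 0 \<le> v \<and> v \<le> w})"

definition modg :: "('a::{real_normed_algebra, lattice, ordered_real_vector} \<Rightarrow> real) \<Rightarrow> 'a \<Rightarrow> real" where
  "modg f x = posP f (x + lat_abs x) - posP f (lat_abs x)"

context
  fixes f :: "'a::{real_normed_algebra, lattice, ordered_real_vector} \<Rightarrow> real"
  assumes bl: "bounded_linear f"
    and N: "\<And>x y::'a. lat_abs x \<le> lat_abs y \<Longrightarrow> norm x \<le> norm y"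
begin

lemma fK: "\<exists>K>0. \<forall>x. norm (f x) \<le> norm x * K"
  using bl bounded_linear.pos_bounded by blast

lemma f_add: "f (x + y) = f x + f y" using bl by (simp add: linear_simps)
lemma f_diff: "f (x - y) = f x - f y" using bl by (simp add: linear_simps)
lemma f_scale: "f (c *\<^sub>R x) = c * f x" using bl by (simp add: linear_simps)
lemma f_zero: "f 0 = 0" using bl by (simp add: linear_simps)

lemma norm_mono_pos: "0 \<le> (v::'a) \<Longrightarrow> v \<le> w \<Longrightarrow> norm v \<le> norm w"
  by (rule N) (simp add: labs_pos)

lemma P_bdd: assumes "0 \<le> w" shows "bdd_above (f ` {v. 0 \<le> v \<and> v \<le> w})"
proof -
  obtain K where K: "K > 0" "\<forall>x. norm (f x) \<le> norm x * K" using fK by blast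
  show ?thesis unfolding bdd_above_def
  proof (intro exI ballI)
    fix t assume "t \<in> f ` {v. 0 \<le> v \<and> v \<le> w}"
    then obtain v where v: "0 \<le> v" "v \<le> w" "t = f v" by auto
    have "t \<le> norm (f v)" using v by simp
    also have "\<dots> \<le> norm v * K" using K by auto
    also have "\<dots> \<le> norm w * K" using norm_mono_pos[OF v(1,2)] K by (simp add: mult_right_mono)
    finally show "t \<le> norm w * K" .
  qed
qed

lemma P_upper: "0 \<le> v \<Longrightarrow> v \<le> w \<Longrightarrow> f v \<le> posP f w"
  unfolding posP_def using P_bdd[of w]
  by (intro cSup_upper) auto

lemma P_least: assumes "0 \<le> w" "\<And>v. 0 \<le> v \<Longrightarrow> v \<le> w \<Longrightarrow> f v \<le> B" shows "posP f w \<le> B"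
  unfolding posP_def using assms by (intro cSup_least) auto

lemma P_nonneg: "0 \<le> w \<Longrightarrow> 0 \<le> posP f w"
  using P_upper[of 0 w] f_zero by simp

lemma P_ge: "0 \<le> w \<Longrightarrow> f w \<le> posP f w"
  using P_upper[of w w] by simp

lemma P_zero: "posP f 0 = 0"
proof -
  have "posP f 0 \<le> 0"
    by (rule P_least) (auto simp: f_zero dest: antisym)
  then show ?thesis using P_nonneg[of 0] by simp
qed

lemma P_bound: "\<exists>K\<ge>0. \<forall>w. 0 \<le> w \<longrightarrow> posP f w \<le> norm w * K"
proof -
  obtain K where K: "K > 0" "\<forall>x. norm (f x) \<le> norm x * K" using fK by blast
  have "posP f w \<le> norm w * K" if "0 \<le> w" for w
  proof (rule P_least[OF that])
    fix v assume v: "0 \<le> v" "v \<le> w"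
    have "f v \<le> norm (f v)" by simp
    also have "\<dots> \<le> norm v * K" using K by auto
    also have "\<dots> \<le> norm w * K" using norm_mono_pos[OF v(1,2)] K by (simp add: mult_right_mono)
    finally show "f v \<le> norm w * K" .
  qed
  then show ?thesis using K by (intro exI[of _ K]) auto
qed

lemma P_add: assumes w1: "0 \<le> w1" and w2: "0 \<le> w2"
  shows "posP f (w1 + w2) = posP f w1 + posP f w2"
proof (rule antisym)
  have w12: "0 \<le> w1 + w2" using w1 w2 by simp
  show "posP f (w1 + w2) \<le> posP f w1 + posP f w2"
  proof (rule P_least[OF w12])
    fix z assume z: "0 \<le> z" "z \<le> w1 + w2"
    define z1 where "z1 = inf z w1"
    define z2 where "z2 = z - z1"
    have z1: "0 \<le> z1" "z1 \<le> w1" using z w1 by (auto simp: z1_def)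
    have "z1 \<le> z" by (simp add: z1_def)
    then have z2a: "0 \<le> z2" by (simp add: z2_def)
    have "z - w2 \<le> z" using w2 by simp
    moreover have "z - w2 \<le> w1" using z(2) by (simp add: algebra_simps)
    ultimately have "z - w2 \<le> z1" by (simp add: z1_def)
    then have z2b: "z2 \<le> w2" by (simp add: z2_def algebra_simps)
    have "f z = f z1 + f z2" using f_add[of z1 z2] by (simp add: z2_def)
    also have "\<dots> \<le> posP f w1 + posP f w2"
      using P_upper[OF z1] P_upper[OF z2a z2b] by simp
    finally show "f z \<le> posP f w1 + posP f w2" .
  qed
  have "posP f w1 \<le> posP f (w1 + w2) - posP f w2"
  proof (rule P_least[OF w1])
    fix v1 assume v1: "0 \<le> v1" "v1 \<le> w1"
    have "posP f w2 \<le> posP f (w1 + w2) - f v1"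
    proof (rule P_least[OF w2])
      fix v2 assume v2: "0 \<le> v2" "v2 \<le> w2"
      have "f (v1 + v2) \<le> posP f (w1 + w2)"
        using v1 v2 by (intro P_upper) (auto intro: add_mono)
      then show "f v2 \<le> posP f (w1 + w2) - f v1" using f_add[of v1 v2] by simp
    qed
    then show "f v1 \<le> posP f (w1 + w2) - posP f w2" by simp
  qed
  then show "posP f w1 + posP f w2 \<le> posP f (w1 + w2)" by simp
qed

lemma P_mono: "0 \<le> v \<Longrightarrow> v \<le> w \<Longrightarrow> posP f v \<le> posP f w"
  using P_add[of v "w - v"] P_nonneg[of "w - v"] by simp

lemma P_scale: assumes w: "0 \<le> w" and c: "0 \<le> c" shows "posP f (c *\<^sub>R w) = c * posP f w"
proof (cases "c = 0")
  case True then show ?thesis by (simp add: P_zero)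
next
  case False
  then have c0: "c > 0" using c by simp
  have cw: "0 \<le> c *\<^sub>R w" using w c by (simp add: scaleR_nonneg_nonneg)
  show ?thesis
  proof (rule antisym)
    show "posP f (c *\<^sub>R w) \<le> c * posP f w"
    proof (rule P_least[OF cw])
      fix v assume v: "0 \<le> v" "v \<le> c *\<^sub>R w"
      have a: "0 \<le> (1/c) *\<^sub>R v" using v c0 by (simp add: scaleR_nonneg_nonneg)
      have "(1/c) *\<^sub>R v \<le> (1/c) *\<^sub>R (c *\<^sub>R w)" using v c0 by (intro scaleR_left_mono) auto
      then have b: "(1/c) *\<^sub>R v \<le> w" using c0 by simp
      have "f v = c * f ((1/c) *\<^sub>R v)" using c0 by (simp add: f_scale)
      also have "\<dots> \<le> c * posP f w" using P_upper[OF a b] c0 by simp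
      finally show "f v \<le> c * posP f w" .
    qed
    have "posP f w \<le> posP f (c *\<^sub>R w) / c"
    proof (rule P_least[OF w])
      fix v assume v: "0 \<le> v" "v \<le> w"
      have a: "0 \<le> c *\<^sub>R v" using v c0 by (simp add: scaleR_nonneg_nonneg)
      have b: "c *\<^sub>R v \<le> c *\<^sub>R w" using v c0 by (intro scaleR_left_mono) auto
      have "f v = f (c *\<^sub>R v) / c" using c0 by (simp add: f_scale)
      also have "\<dots> \<le> posP f (c *\<^sub>R w) / c" using P_upper[OF a b] c0 by (simp add: divide_right_mono)
      finally show "f v \<le> posP f (c *\<^sub>R w) / c" .
    qed
    then show "c * posP f w \<le> posP f (c *\<^sub>R w)" using c0 by (simp add: field_simps)
  qed
qed

lemma g_any: assumes t: "0 \<le> t" and xt: "0 \<le> x + t"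
  shows "modg f x = posP f (x + t) - posP f t"
proof -
  have "posP f (x + t) + posP f (lat_abs x) = posP f (x + t + lat_abs x)"
    using P_add[OF xt labs_nonneg] by simp
  also have "x + t + lat_abs x = (x + lat_abs x) + t" by (simp add: algebra_simps)
  also have "posP f \<dots> = posP f (x + lat_abs x) + posP f t"
    using P_add[OF x_plus_labs t] by simp
  finally show ?thesis unfolding modg_def by simp
qed

lemma g_pos: "0 \<le> w \<Longrightarrow> modg f w = posP f w"
  using g_any[of 0 w] by (simp add: P_zero)

lemma g_add: "modg f (x + y) = modg f x + modg f y"
proof -
  have t: "0 \<le> lat_abs x + lat_abs y" using labs_nonneg[of x] labs_nonneg[of y] by simp
  have e: "x + y + (lat_abs x + lat_abs y) = (x + lat_abs x) + (y + lat_abs y)"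
    by (simp add: algebra_simps)
  have xt: "0 \<le> x + y + (lat_abs x + lat_abs y)" unfolding e
    using x_plus_labs[of x] x_plus_labs[of y] by simp
  have "modg f (x + y) = posP f ((x + lat_abs x) + (y + lat_abs y)) - posP f (lat_abs x + lat_abs y)"
    using g_any[OF t xt] e by simp
  then show ?thesis
    unfolding modg_def
    using P_add[OF x_plus_labs[of x] x_plus_labs[of y]] P_add[OF labs_nonneg[of x] labs_nonneg[of y]]
    by simp
qed

lemma g_zero: "modg f 0 = 0"
  unfolding modg_def by simp

lemma g_neg: "modg f (- x) = - modg f x"
  using g_add[of x "- x"] g_zero by simp

lemma g_scale_pos: assumes c: "0 \<le> c" shows "modg f (c *\<^sub>R x) = c * modg f x"
proof -
  have t: "0 \<le> c *\<^sub>R lat_abs x" using c labs_nonneg[of x] by (simp add: scaleR_nonneg_nonneg)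
  have e: "c *\<^sub>R x + c *\<^sub>R lat_abs x = c *\<^sub>R (x + lat_abs x)" by (simp add: scaleR_right_distrib)
  have xt: "0 \<le> c *\<^sub>R x + c *\<^sub>R lat_abs x" unfolding e using c x_plus_labs[of x]
    by (simp add: scaleR_nonneg_nonneg)
  have "modg f (c *\<^sub>R x) = posP f (c *\<^sub>R (x + lat_abs x)) - posP f (c *\<^sub>R lat_abs x)"
    using g_any[OF t xt] e by simp
  then show ?thesis unfolding modg_def
    using P_scale[OF x_plus_labs c] P_scale[OF labs_nonneg c] by (simp add: right_diff_distrib)
qed

lemma g_scale: "modg f (c *\<^sub>R x) = c * modg f x"
proof (cases "0 \<le> c")
  case True then show ?thesis by (rule g_scale_pos)
next
  case False
  have "c *\<^sub>R x = (- c) *\<^sub>R (- x)" by simp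
  then have "modg f (c *\<^sub>R x) = (- c) * modg f (- x)" using False g_scale_pos[of "- c" "- x"] by simp
  then show ?thesis using g_neg by simp
qed

lemma norm_labs: "norm (lat_abs (x::'a)) \<le> norm x"
  by (rule N) (simp add: labs_pos labs_nonneg)

lemma g_bl: "bounded_linear (modg f)"
proof -
  obtain K where K: "K \<ge> 0" "\<forall>w. 0 \<le> w \<longrightarrow> posP f w \<le> norm w * K" using P_bound by blast
  show ?thesis
  proof (rule bounded_linear_intro[where K = "2 * K"])
    fix x y show "modg f (x + y) = modg f x + modg f y" by (rule g_add)
  next
    fix r x show "modg f (r *\<^sub>R x) = r *\<^sub>R modg f x" using g_scale by simp
  next
    fix x
    have a: "0 \<le> posP f (x + lat_abs x)" "0 \<le> posP f (lat_abs x)"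
      using P_nonneg x_plus_labs labs_nonneg by auto
    have "posP f (x + lat_abs x) \<le> norm (x + lat_abs x) * K" using K x_plus_labs by blast
    also have "\<dots> \<le> (norm x + norm (lat_abs x)) * K" using K by (simp add: mult_right_mono norm_triangle_ineq)
    also have "\<dots> \<le> (2 * norm x) * K" using K norm_labs[of x] by (simp add: mult_right_mono)
    finally have b: "posP f (x + lat_abs x) \<le> 2 * norm x * K" .
    have "posP f (lat_abs x) \<le> norm (lat_abs x) * K" using K labs_nonneg by blast
    also have "\<dots> \<le> 2 * norm x * K" using K norm_labs[of x] norm_ge_zero[of x] by (intro mult_right_mono) linarith+
    finally have c: "posP f (lat_abs x) \<le> 2 * norm x * K" .
    show "norm (modg f x) \<le> norm x * (2 * K)" unfolding modg_def using a b c by simp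
  qed
qed

lemma dominate: assumes v: "0 \<le> v" "v \<le> w"
  shows "\<bar>f v\<bar> \<le> \<bar>modg f w\<bar> + \<bar>modg f w - f w\<bar>"
proof -
  have w: "0 \<le> w" using v by simp
  have wv: "0 \<le> w - v" using v by simp
  have "f v \<le> posP f v" using P_ge v by simp
  also have "\<dots> \<le> posP f w" using P_mono v by simp
  finally have 1: "f v \<le> modg f w" using g_pos[OF w] by simp
  have "posP f w = posP f v + posP f (w - v)" using P_add[OF v(1) wv] by simp
  moreover have "f w = f (w - v) + f v" using f_diff[of w v] by simp
  moreover have "0 \<le> posP f v" using P_nonneg v by simp
  moreover have "f (w - v) \<le> posP f (w - v)" using P_ge wv by simp
  ultimately have 2: "- f v \<le> modg f w - f w" using g_pos[OF w] by simp
  show ?thesis using 1 2 by linarith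
qed

end

lemma mult_mono_pos:
  fixes a b u :: "'a::{real_normed_algebra, banach, lattice, ordered_real_vector}"
  assumes "banach_f_algebra TYPE('a)" "a \<le> b" "0 \<le> u"
  shows "a * u \<le> b * u"
proof -
  have "0 \<le> (b - a) * u" using assms unfolding banach_f_algebra_def by auto
  then show ?thesis by (simp add: left_diff_distrib)
qed

theorem lemma2p16:
  assumes "banach_f_algebra TYPE('a::{real_normed_algebra, banach, lattice, ordered_real_vector})"
  shows "mw_continuous TYPE('a) TYPE('i) \<longleftrightarrow>
    (\<forall>(I::'i set) r (x::'i \<Rightarrow> 'a). directed_on I r \<longrightarrow> net_decr_to_zero I r x \<longrightarrow> mw_conv I r x 0)"
proof
  assume H: "mw_continuous TYPE('a) TYPE('i)"
  show "\<forall>(I::'i set) r (x::'i \<Rightarrow> 'a). directed_on I r \<longrightarrow> net_decr_to_zero I r x \<longrightarrow> mw_conv I r x 0"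
  proof (intro allI impI)
    fix I :: "'i set" and r and x :: "'i \<Rightarrow> 'a"
    assume d: "directed_on I r" and n: "net_decr_to_zero I r x"
    have "order_conv I r x 0"
      unfolding order_conv_def
    proof (intro exI conjI ballI)
      show "directed_on I r" by (rule d)
      show "net_decr_to_zero I r x" by (rule n)
      fix b assume b: "b \<in> I"
      show "net_eventually I r (\<lambda>a. lat_abs (x a - 0) \<le> x b)"
        unfolding net_eventually_def
      proof (intro bexI[OF _ b] ballI impI)
        fix a assume a: "a \<in> I" "r b a"
        have "0 \<le> x a" using n a unfolding net_decr_to_zero_def by auto
        then show "lat_abs (x a - 0) \<le> x b" using n a b unfolding net_decr_to_zero_def
          by (simp add: labs_pos)
      qed
    qed
    then show "mw_conv I r x 0" using H d unfolding mw_continuous_def by blast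
  qed
next
  assume H: "\<forall>(I::'i set) r (x::'i \<Rightarrow> 'a). directed_on I r \<longrightarrow> net_decr_to_zero I r x \<longrightarrow> mw_conv I r x 0"
  have N: "\<And>x y::'a. lat_abs x \<le> lat_abs y \<Longrightarrow> norm x \<le> norm y"
    using assms unfolding banach_f_algebra_def by blast
  have prodpos: "\<And>x y::'a. 0 \<le> x \<Longrightarrow> 0 \<le> y \<Longrightarrow> 0 \<le> x * y"
    using assms unfolding banach_f_algebra_def by blast
  show "mw_continuous TYPE('a) TYPE('i)"
    unfolding mw_continuous_def
  proof (intro allI impI)
    fix I :: "'i set" and r and x :: "'i \<Rightarrow> 'a"
    assume d: "directed_on I r" and oc: "order_conv I r x 0"
    then obtain J :: "'i set" and s and y :: "'i \<Rightarrow> 'a" where J: "directed_on J s" "net_decr_to_zero J s y"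
      and ev: "\<forall>b\<in>J. net_eventually I r (\<lambda>a. lat_abs (x a - 0) \<le> y b)"
      unfolding order_conv_def by blast
    have mwy: "mw_conv J s y 0" using H J by blast
    show "mw_conv I r x 0" unfolding mw_conv_def weak_conv_def
    proof (intro allI impI)
      fix u :: 'a and f :: "'a \<Rightarrow> real" and e :: real
      assume u: "0 \<le> u" and f: "bounded_linear f" and e: "0 < e"
      have wy: "weak_conv J s (\<lambda>b. lat_abs (y b - 0) * u) 0" using mwy u unfolding mw_conv_def by blast
      have bg: "bounded_linear (modg f)" using g_bl[OF f N] .
      have bh: "bounded_linear (\<lambda>z. modg f z - f z)" using bounded_linear_sub[OF bg f] .
      have e2: "0 < e / 2" using e by simp
      obtain b1 where b1: "b1 \<in> J" "\<forall>b\<in>J. s b1 b \<longrightarrow> \<bar>modg f (lat_abs (y b - 0) * u) - modg f 0\<bar> < e / 2"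
        using wy bg e2 unfolding weak_conv_def net_eventually_def by blast
      obtain b2 where b2: "b2 \<in> J" "\<forall>b\<in>J. s b2 b \<longrightarrow>
           \<bar>(modg f (lat_abs (y b - 0) * u) - f (lat_abs (y b - 0) * u)) - (modg f 0 - f 0)\<bar> < e / 2"
        using wy bh e2 unfolding weak_conv_def net_eventually_def by blast
      obtain c where c: "c \<in> J" "s b1 c" "s b2 c" using J(1) b1(1) b2(1) unfolding directed_on_def by blast
      have yc: "0 \<le> y c" using J(2) c(1) unfolding net_decr_to_zero_def by blast
      have z0: "modg f 0 = 0" "f 0 = 0" using g_zero[OF f N] f by (auto simp: linear_simps)
      have A: "\<bar>modg f (y c * u)\<bar> < e / 2" using b1(2)[rule_format, OF c(1) c(2)] z0 yc by (simp add: labs_pos)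
      have B: "\<bar>modg f (y c * u) - f (y c * u)\<bar> < e / 2" using b2(2)[rule_format, OF c(1) c(3)] z0 yc by (simp add: labs_pos)
      obtain a0 where a0: "a0 \<in> I" "\<forall>a\<in>I. r a0 a \<longrightarrow> lat_abs (x a - 0) \<le> y c"
        using ev c(1) unfolding net_eventually_def by blast
      show "net_eventually I r (\<lambda>a. \<bar>f (lat_abs (x a - 0) * u) - f 0\<bar> < e)"
        unfolding net_eventually_def
      proof (intro bexI[OF _ a0(1)] ballI impI)
        fix a assume a: "a \<in> I" "r a0 a"
        have v0: "0 \<le> lat_abs (x a - 0) * u" using prodpos labs_nonneg u by blast
        have vw: "lat_abs (x a - 0) * u \<le> y c * u"
          using mult_mono_pos[OF assms a0(2)[rule_format, OF a] u] .
        have "\<bar>f (lat_abs (x a - 0) * u)\<bar> \<le> \<bar>modg f (y c * u)\<bar> + \<bar>modg f (y c * u) - f (y c * u)\<bar>"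
          using dominate[OF f N v0 vw] .
        then show "\<bar>f (lat_abs (x a - 0) * u) - f 0\<bar> < e" using A B z0 by simp
      qed
    qed
  qed
qed

end
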